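(* Let $X$ be a Tychonoff $\Delta$-space and let $\varphi:X\to Y$ be a quotient continuous surjection onto a Tychonoff space $Y$ such that only finitely many fibers $\varphi^{-1}(y)$, $y\in Y$, have more than one point. Then $Y$ is a $\Delta$-space.
   Context: A topological space $X$ is a $\Delta$-space if for every decreasing sequence $\{D_n:n\in\omega\}$ of subsets of $X$ with $\bigcap_n D_n=\emptyset$ there is a decreasing sequence $\{V_n:n\in\omega\}$ of open subsets of $X$ with $D_n\subseteq V_n$ for all $n$ and $\bigcap_n V_n=\emptyset$. *)

theory Defs
  imports "HOL-Analysis.Analysis"
begin

definition tychonoff_space :: "'a topology \<Rightarrow> bool" where
  "tychonoff_space X \<longleftrightarrow> completely_regular_space X \<and> t1_space X"

definition delta_space :: "'a topology \<Rightarrow> bool" where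
  "delta_space X \<longleftrightarrow>
     (\<forall>D :: nat \<Rightarrow> 'a set.
        (\<forall>n. D n \<subseteq> topspace X) \<and> decseq D \<and> (\<Inter>n. D n) = {} \<longrightarrow>
        (\<exists>V :: nat \<Rightarrow> 'a set. (\<forall>n. openin X (V n)) \<and> decseq V \<and>
            (\<forall>n. D n \<subseteq> V n) \<and> (\<Inter>n. V n) = {}))"

end

theory Submission
  imports Defs
begin

theorem proposition5p2:
  fixes X :: "'a topology" and Y :: "'b topology" and \<phi> :: "'a \<Rightarrow> 'b"
  assumes "tychonoff_space X" and "delta_space X"
    and "tychonoff_space Y"
    and "continuous_map X Y \<phi>" and "quotient_map X Y \<phi>"
    and "finite {y \<in> topspace Y. \<exists>a b. a \<in> topspace X \<and> b \<in> topspace X \<and> a \<noteq> b \<and> \<phi> a = y \<and> \<phi> b = y}"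
  shows "delta_space Y"
proof -
  define F where "F = {y \<in> topspace Y. \<exists>a b. a \<in> topspace X \<and> b \<in> topspace X \<and> a \<noteq> b \<and> \<phi> a = y \<and> \<phi> b = y}"
  have finF: "finite F" using assms(6) F_def by simp
  have t1: "t1_space Y" using assms(3) tychonoff_space_def by blast
  have surj: "\<phi> ` topspace X = topspace Y" using quotient_imp_surjective_map[OF assms(5)] .
  have qo: "\<And>U. U \<subseteq> topspace Y \<Longrightarrow> openin X {x \<in> topspace X. \<phi> x \<in> U} \<Longrightarrow> openin Y U"
    using assms(5) unfolding quotient_map_def by (simp only:)
  have img: "\<And>x. x \<in> topspace X \<Longrightarrow> \<phi> x \<in> topspace Y" using surj by blast
  have clF: "closedin Y F" using t1 finF t1_space_closedin_finite F_def by fastforce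
  define P where "P = {x \<in> topspace X. \<phi> x \<in> F}"
  have clP: "closedin X P" unfolding P_def
    using closedin_continuous_map_preimage[OF assms(4) clF] .
  have inj: "\<And>a b. a \<in> topspace X \<Longrightarrow> b \<in> topspace X \<Longrightarrow> \<phi> a = \<phi> b \<Longrightarrow> \<phi> a \<notin> F \<Longrightarrow> a = b"
  proof (rule ccontr)
    fix a b assume h: "a \<in> topspace X" "b \<in> topspace X" "\<phi> a = \<phi> b" "\<phi> a \<notin> F" "a \<noteq> b"
    then have "\<phi> a \<in> F" unfolding F_def using img[OF h(1)] by auto
    then show False using h(4) by simp
  qed
  have opimg: "openin Y (\<phi> ` W)" if "openin X W" "W \<inter> P = {}" for W
  proof -
    have W: "W \<subseteq> topspace X" using that openin_subset by blast
    have "{x \<in> topspace X. \<phi> x \<in> \<phi> ` W} = W"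
    proof
      show "W \<subseteq> {x \<in> topspace X. \<phi> x \<in> \<phi> ` W}" using W by blast
      show "{x \<in> topspace X. \<phi> x \<in> \<phi> ` W} \<subseteq> W"
      proof
        fix x assume x: "x \<in> {x \<in> topspace X. \<phi> x \<in> \<phi> ` W}"
        then obtain w where w: "w \<in> W" "\<phi> x = \<phi> w" by blast
        have "\<phi> w \<notin> F" using w W that(2) P_def by blast
        then have "x = w" using inj[of x w] x w W by auto
        then show "x \<in> W" using w by simp
      qed
    qed
    moreover have "\<phi> ` W \<subseteq> topspace Y" using W img by blast
    ultimately show ?thesis using qo that(1) by metis
  qed
  show ?thesis unfolding delta_space_def
  proof (intro allI impI)
    fix D :: "nat \<Rightarrow> 'b set"
    assume D: "(\<forall>n. D n \<subseteq> topspace Y) \<and> decseq D \<and> (\<Inter>n. D n) = {}"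
    define E where "E n = {x \<in> topspace X. \<phi> x \<in> D n}" for n
    have "(\<forall>n. E n \<subseteq> topspace X) \<and> decseq E \<and> (\<Inter>n. E n) = {}"
      using D unfolding E_def decseq_def by blast
    then obtain U where U: "\<forall>n. openin X (U n)" "decseq U" "\<forall>n. E n \<subseteq> U n" "(\<Inter>n. U n) = {}"
      using assms(2) unfolding delta_space_def by meson
    have ev: "\<forall>\<^sub>F n in sequentially. \<forall>y\<in>F. y \<notin> D n"
    proof (rule eventually_ball_finite[OF finF], rule ballI)
      fix y assume "y \<in> F"
      from D obtain m where "y \<notin> D m" by blast
      then show "\<forall>\<^sub>F n in sequentially. y \<notin> D n"
        unfolding eventually_sequentially using D decseq_def by blast
    qed
    then obtain N where N: "\<And>n. n \<ge> N \<Longrightarrow> \<forall>y\<in>F. y \<notin> D n"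
      unfolding eventually_sequentially by blast
    define W where "W n = U n - P" for n
    define V where "V n = (if n < N then topspace Y else \<phi> ` W n)" for n
    have Wo: "openin X (W n)" for n unfolding W_def using U(1) clP by (simp add: openin_diff)
    have WX: "W n \<subseteq> topspace X" for n using Wo openin_subset by blast
    show "\<exists>V. (\<forall>n. openin Y (V n)) \<and> decseq V \<and> (\<forall>n. D n \<subseteq> V n) \<and> (\<Inter>n. V n) = {}"
    proof (intro exI conjI allI)
      fix n show "openin Y (V n)" unfolding V_def using opimg[OF Wo] W_def by auto
    next
      show "decseq V" unfolding decseq_def
      proof (intro allI impI)
        fix m n :: nat assume "m \<le> n"
        then have "W n \<subseteq> W m" using U(2) unfolding W_def decseq_def by blast
        then show "V n \<subseteq> V m" unfolding V_def using WX img \<open>m \<le> n\<close> by auto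
      qed
    next
      fix n show "D n \<subseteq> V n"
      proof (cases "n < N")
        case True then show ?thesis using D V_def by auto
      next
        case False
        show ?thesis
        proof
          fix y assume y: "y \<in> D n"
          have "y \<in> topspace Y" using D y by blast
          then obtain x where x: "x \<in> topspace X" "\<phi> x = y" using surj by (metis imageE)
          have "x \<in> E n" using x y E_def by blast
          then have "x \<in> U n" using U(3) by blast
          moreover have "x \<notin> P" using N[of n] False y x P_def by auto
          ultimately show "y \<in> V n" using False x unfolding V_def W_def by auto
        qed
      qed
    next
      show "(\<Inter>n. V n) = {}"
      proof (rule ccontr)
        assume "(\<Inter>n. V n) \<noteq> {}"
        then obtain y where y: "\<And>n. y \<in> V n" by blast
        from y[of N] obtain x where x: "x \<in> W N" "\<phi> x = y" unfolding V_def by auto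
        have xX: "x \<in> topspace X" using x WX by blast
        have yF: "y \<notin> F" using x W_def P_def xX by blast
        have "x \<in> U n" for n
        proof (cases "n \<le> N")
          case True then show ?thesis using x U(2) W_def decseq_def by blast
        next
          case False
          from y[of n] False obtain z where z: "z \<in> W n" "\<phi> z = y" unfolding V_def by auto
          have zX: "z \<in> topspace X" using z(1) WX by blast
          have "z = x" using inj[OF zX xX] z(2) x(2) yF by simp
          then show ?thesis using z W_def by blast
        qed
        then show False using U(4) by blast
      qed
    qed
  qed
qed

end
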